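(* Consider $\min_{\beta\in\mathbb{R}^p} f(\beta)+\sum_{j=1}^p g_j(\beta_j)$ under the following hypotheses: $f$ is convex, differentiable, with $|\nabla_j f(x+he_j)-\nabla_j f(x)|\le L_j|h|$ ($L_j>0$); each $g_j$ is proper, closed, lower bounded and $g_j/L_j+\frac{\alpha}{2}(\cdot)^2$ is convex for some $\alpha<1$; cyclic proximal coordinate descent converges to a critical point $\hat\beta$; with $\mathcal{S}=\mathrm{gsupp}(\hat\beta)=\{j_1,\dots,j_{|\mathcal{S}|}\}$, $-\nabla_j f(\hat\beta)\in\mathrm{interior}(\partial g_j(\hat\beta_j))$ for $j\notin\mathcal{S}$, $f$ is $\mathcal{C}^3$ near $\hat\beta$, $g_j$ is $\mathcal{C}^3$ near $\hat\beta_j$ for $j\in\mathcal{S}$, and $M:=\nabla^2_{\mathcal{S},\mathcal{S}}f(\hat\beta)+\nabla^2_{\mathcal{S},\mathcal{S}}g(\hat\beta)\succ0$. Let $\gamma_j=1/L_j$ and, for $s\in[|\mathcal{S}|]$, $B^{(s)}=M^{1/2}_{:s}\,\frac{\gamma_{j_s}}{1+\gamma_{j_s}g_{j_s}''(\hat\beta_{j_s})}\,(M^{1/2}_{:s})^\top$, where $M^{1/2}_{:s}$ is the $s$-th column of $M^{1/2}$. Then for all $s\in[|\mathcal{S}|]$ and all $u\in\mathbb{R}^{|\mathcal{S}|}$: if $\|(\mathrm{Id}-B^{(s)})u\|=\|u\|$, then $u\in\mathrm{Span}(M^{1/2}_{:s})^\perp$ and $(\mathrm{Id}-B^{(s)}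)u=u$.
   Context: $\partial$ is the Fréchet subdifferential, critical point means $-\nabla f(x)\in\partial g(x)$ with $g(\beta)=\sum_jg_j(\beta_j)$, and $\mathrm{gsupp}(\beta)=\{j:\partial g_j(\beta_j)\text{ is a singleton}\}$. $\nabla^2_{\mathcal{S},\mathcal{S}}g(\hat\beta)=\mathrm{diag}(g_j''(\hat\beta_j))_{j\in\mathcal{S}}$. Norms are Euclidean. Cyclic proximal coordinate descent updates, for $j=1,\dots,p$ in turn, $\beta_j\leftarrow\mathrm{prox}_{g_j/L_j}(\beta_j-\nabla_jf(\beta)/L_j)$, with $\mathrm{prox}_h(z)=\arg\min_u\frac12(u-z)^2+h(u)$. *)

theory Defs
  imports "HOL-Analysis.Analysis"
begin

definition ext_proper :: "(real \<Rightarrow> ereal) \<Rightarrow> bool" where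
  "ext_proper h \<longleftrightarrow> (\<exists>x. h x \<noteq> \<infinity>) \<and> (\<forall>x. h x \<noteq> -\<infinity>)"

text \<open>closed = lower semicontinuous\<close>
definition ext_closed :: "(real \<Rightarrow> ereal) \<Rightarrow> bool" where
  "ext_closed h \<longleftrightarrow> (\<forall>x c. c < h x \<longrightarrow> (\<forall>\<^sub>F y in at x. c < h y))"

definition ext_lower_bounded :: "(real \<Rightarrow> ereal) \<Rightarrow> bool" where
  "ext_lower_bounded h \<longleftrightarrow> (\<exists>c. \<forall>x. ereal c \<le> h x)"

definition ext_convex :: "(real \<Rightarrow> ereal) \<Rightarrow> bool" where
  "ext_convex h \<longleftrightarrow> (\<forall>x y t. 0 < t \<and> t < 1 \<longrightarrow>
      h ((1 - t) * x + t * y) \<le> ereal (1 - t) * h x + ereal t * h y)"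

definition frechet_subdiff :: "('a::real_inner \<Rightarrow> ereal) \<Rightarrow> 'a \<Rightarrow> 'a set" where
  "frechet_subdiff G x = {v. \<exists>r. G x = ereal r \<and>
      (\<forall>\<epsilon>>0. \<exists>\<delta>>0. \<forall>y. dist y x < \<delta> \<longrightarrow>
          ereal (r + inner v (y - x) - \<epsilon> * norm (y - x)) \<le> G y)}"

definition gsupp :: "('n \<Rightarrow> real \<Rightarrow> ereal) \<Rightarrow> real^'n \<Rightarrow> 'n set" where
  "gsupp g \<beta> = {j. \<exists>v. frechet_subdiff (g j) (\<beta> $ j) = {v}}"

definition sep_sum :: "('n::finite \<Rightarrow> real \<Rightarrow> ereal) \<Rightarrow> real^'n \<Rightarrow> ereal" where
  "sep_sum g \<beta> = (\<Sum>j\<in>UNIV. g j (\<beta> $ j))"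

definition pdiff :: "'n \<Rightarrow> (real^'n \<Rightarrow> real) \<Rightarrow> real^'n \<Rightarrow> real" where
  "pdiff j f x = frechet_derivative f (at x) (axis j 1)"

definition grad :: "(real^'n \<Rightarrow> real) \<Rightarrow> real^'n \<Rightarrow> real^'n" where
  "grad f x = (\<chi> j. pdiff j f x)"

definition hess :: "(real^'n \<Rightarrow> real) \<Rightarrow> real^'n \<Rightarrow> 'n \<Rightarrow> 'n \<Rightarrow> real" where
  "hess f x i j = pdiff i (pdiff j f) x"

text \<open>k times continuously differentiable on an open set U (finite dimension:
  differentiable with all partial derivatives of order \<le> k existing and continuous)\<close>
fun Ck_on :: "nat \<Rightarrow> 'a::euclidean_space set \<Rightarrow> ('a \<Rightarrow> real) \<Rightarrow> bool" where
  "Ck_on 0 U f \<longleftrightarrow> continuous_on U f"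
| "Ck_on (Suc k) U f \<longleftrightarrow> (\<forall>x\<in>U. f differentiable (at x)) \<and>
      (\<forall>b\<in>Basis. Ck_on k U (\<lambda>x. frechet_derivative f (at x) b))"

definition gpp :: "(real \<Rightarrow> ereal) \<Rightarrow> real \<Rightarrow> real" where
  "gpp h x = deriv (deriv (\<lambda>t. real_of_ereal (h t))) x"

definition prox :: "(real \<Rightarrow> ereal) \<Rightarrow> real \<Rightarrow> real" where
  "prox h z = (THE u. \<forall>v. ereal ((u - z)^2 / 2) + h u \<le> ereal ((v - z)^2 / 2) + h v)"

definition cd_update ::
  "(real^'n \<Rightarrow> real) \<Rightarrow> ('n \<Rightarrow> real \<Rightarrow> ereal) \<Rightarrow> ('n \<Rightarrow> real) \<Rightarrow> 'n \<Rightarrow> real^'n \<Rightarrow> real^'n" where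
  "cd_update f g L j \<beta> =
     (\<chi> i. if i = j then prox (\<lambda>u. g j u / ereal (L j)) (\<beta> $ j - pdiff j f \<beta> / L j) else \<beta> $ i)"

definition cd_epoch ::
  "((real, 'n::{finite,linorder}) vec \<Rightarrow> real) \<Rightarrow> ('n \<Rightarrow> real \<Rightarrow> ereal) \<Rightarrow> ('n \<Rightarrow> real) \<Rightarrow> (real, 'n) vec \<Rightarrow> (real, 'n) vec" where
  "cd_epoch f g L \<beta> = fold (cd_update f g L) (sorted_list_of_set UNIV) \<beta>"

definition sym_mat :: "nat \<Rightarrow> (nat \<Rightarrow> nat \<Rightarrow> real) \<Rightarrow> bool" where
  "sym_mat k A \<longleftrightarrow> (\<forall>s<k. \<forall>t<k. A s t = A t s)"

definition posdef_mat :: "nat \<Rightarrow> (nat \<Rightarrow> nat \<Rightarrow> real) \<Rightarrow> bool" where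
  "posdef_mat k A \<longleftrightarrow> sym_mat k A \<and>
     (\<forall>v. (\<exists>t<k. v t \<noteq> 0) \<longrightarrow> (\<Sum>s<k. \<Sum>t<k. v s * A s t * v t) > 0)"

definition psd_mat :: "nat \<Rightarrow> (nat \<Rightarrow> nat \<Rightarrow> real) \<Rightarrow> bool" where
  "psd_mat k A \<longleftrightarrow> sym_mat k A \<and> (\<forall>v. (\<Sum>s<k. \<Sum>t<k. v s * A s t * v t) \<ge> 0)"

text \<open>the (unique) symmetric positive semidefinite square root, zero outside {0..<k}\<close>
definition mat_sqrt :: "nat \<Rightarrow> (nat \<Rightarrow> nat \<Rightarrow> real) \<Rightarrow> (nat \<Rightarrow> nat \<Rightarrow> real)" where
  "mat_sqrt k A = (THE R. psd_mat k R \<and> (\<forall>s<k. \<forall>t<k. (\<Sum>r<k. R s r * R r t) = A s t) \<and>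
                          (\<forall>s t. k \<le> s \<or> k \<le> t \<longrightarrow> R s t = 0))"

definition vnorm :: "nat \<Rightarrow> (nat \<Rightarrow> real) \<Rightarrow> real" where
  "vnorm k u = sqrt (\<Sum>t<k. (u t)^2)"

text \<open>enumeration j_1 < ... < j_|S| of S (0-based: s = 0..|S|-1)\<close>
definition enum_idx :: "'n::{finite,linorder} set \<Rightarrow> nat \<Rightarrow> 'n" where
  "enum_idx S s = sorted_list_of_set S ! s"

definition Mmat :: "((real, 'n::{finite,linorder}) vec \<Rightarrow> real) \<Rightarrow> ('n \<Rightarrow> real \<Rightarrow> ereal) \<Rightarrow> 'n set
    \<Rightarrow> (real, 'n) vec \<Rightarrow> nat \<Rightarrow> nat \<Rightarrow> real" where
  "Mmat f g S \<beta> s t = hess f \<beta> (enum_idx S s) (enum_idx S t)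
      + (if s = t then gpp (g (enum_idx S s)) (\<beta> $ enum_idx S s) else 0)"

definition Bmat :: "((real, 'n::{finite,linorder}) vec \<Rightarrow> real) \<Rightarrow> ('n \<Rightarrow> real \<Rightarrow> ereal) \<Rightarrow> ('n \<Rightarrow> real)
    \<Rightarrow> 'n set \<Rightarrow> (real, 'n) vec \<Rightarrow> nat \<Rightarrow> nat \<Rightarrow> nat \<Rightarrow> real" where
  "Bmat f g L S \<beta> s a b =
     (let R = mat_sqrt (card S) (Mmat f g S \<beta>);
          j = enum_idx S s;
          \<gamma> = 1 / L j
      in R a s * (\<gamma> / (1 + \<gamma> * gpp (g j) (\<beta> $ j))) * R b s)"

end

theory Submission
  imports Defs "HOL-Analysis.Analysis"
begin


lemma quad_aux:
  fixes n c :: real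
  assumes "\<And>t. 2*t*n + t^2*c \<le> 0" "n \<ge> 0"
  shows "n = 0"
proof (rule ccontr)
  assume "n \<noteq> 0" hence np: "n > 0" using assms(2) by simp
  define t where "t = n / (\<bar>c\<bar> + 1)"
  have tp: "t > 0" using np by (simp add: t_def)
  have "t * \<bar>c\<bar> \<le> n" unfolding t_def using np
    by (simp add: field_simps)
  have "t^2 * (-\<bar>c\<bar>) \<le> t^2 * c" by (rule mult_left_mono) auto
  hence a1: "t^2*c \<ge> -(t^2*\<bar>c\<bar>)" by simp
  have a2: "t^2*\<bar>c\<bar> = t*(t*\<bar>c\<bar>)" by (simp add: power2_eq_square)
  have a3: "t*(t*\<bar>c\<bar>) \<le> t*n" using \<open>t * \<bar>c\<bar> \<le> n\<close> tp by (simp add: mult_left_mono)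
  have "t*n > 0" using tp np by simp
  hence "2*t*n + t^2*c > 0" using a1 a2 a3 by linarith
  thus False using assms(1)[of t] by simp
qed

lemma spectral_aux:
  fixes A :: "'a::euclidean_space \<Rightarrow> 'a"
  assumes lin: "linear A" and sym: "\<And>x y. inner (A x) y = inner x (A y)"
  shows "subspace V \<Longrightarrow> A ` V \<subseteq> V \<Longrightarrow> \<exists>B. finite B \<and> B \<subseteq> V \<and> span B = V \<and>
     (\<forall>b\<in>B. norm b = 1 \<and> (\<exists>l. A b = l *\<^sub>R b)) \<and> pairwise orthogonal B"
proof (induction "dim V" arbitrary: V rule: less_induct)
  case less
  show ?case
  proof (cases "V = {0}")
    case True
    thus ?thesis by (intro exI[of _ "{}"]) auto
  next
    case False
    then obtain v0 where v0: "v0 \<in> V" "v0 \<noteq> 0" using less.prems subspace_0 by blast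
    define K where "K = V \<inter> sphere 0 1"
    have "compact K" unfolding K_def
      by (intro closed_Int_compact closed_subspace less.prems compact_sphere)
    moreover have "v0 /\<^sub>R norm v0 \<in> K" unfolding K_def using v0 less.prems(1)
      by (auto simp: subspace_scale)
    hence "K \<noteq> {}" by auto
    moreover have "continuous_on K (\<lambda>x. inner x (A x))"
      using lin by (intro continuous_intros linear_continuous_on) (auto simp: linear_conv_bounded_linear)
    ultimately obtain v where v: "v \<in> K" and vmax: "\<And>y. y \<in> K \<Longrightarrow> inner y (A y) \<le> inner v (A v)"
      using continuous_attains_sup[of K "\<lambda>x. inner x (A x)"] by blast
    define l where "l = inner v (A v)"
    have vV: "v \<in> V" and nv: "norm v = 1" using v by (auto simp: K_def)
    have vv: "inner v v = 1" using nv by (simp add: dot_square_norm)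
    have bound: "inner x (A x) \<le> l * inner x x" if "x \<in> V" for x
    proof (cases "x = 0")
      case True thus ?thesis using linear_0[OF lin] by simp
    next
      case False
      have "x /\<^sub>R norm x \<in> K" unfolding K_def using that False less.prems(1)
        by (auto simp: subspace_scale)
      hence "inner (x /\<^sub>R norm x) (A (x /\<^sub>R norm x)) \<le> l" using vmax l_def by blast
      hence "inverse (norm x) * (inverse (norm x) * inner x (A x)) \<le> l"
        using linear_scale[OF lin] by simp
      hence "inner x (A x) / (norm x)^2 \<le> l" by (simp add: power2_eq_square divide_inverse mult_ac)
      thus ?thesis using False by (simp add: dot_square_norm field_simps)
    qed
    define w where "w = A v - l *\<^sub>R v"
    have wV: "w \<in> V" unfolding w_def using less.prems vV
      by (meson image_subset_iff subspace_diff subspace_scale)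
    have "2*t*inner w w + t^2*(inner w (A w) - l * inner w w) \<le> 0" for t
    proof -
      have "v + t *\<^sub>R w \<in> V" using vV wV less.prems(1) by (simp add: subspace_add subspace_scale)
      from bound[OF this]
      have "inner (v + t *\<^sub>R w) (A v + t *\<^sub>R A w) \<le> l * inner (v + t *\<^sub>R w) (v + t *\<^sub>R w)"
        using linear_add[OF lin] linear_scale[OF lin] by simp
      moreover have "inner v (A w) = inner w (A v)" using sym[of v w] by (simp add: inner_commute)
      moreover have "inner w (A v) - l * inner v w = inner w w"
        unfolding w_def by (simp add: inner_diff_left inner_diff_right l_def inner_commute algebra_simps)
      moreover have "inner v (A v) = l" by (simp add: l_def)
      ultimately show ?thesis using vv
        by (simp add: inner_add_left inner_add_right inner_commute power2_eq_square algebra_simps)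
    qed
    hence "inner w w = 0" by (intro quad_aux) auto
    hence eig: "A v = l *\<^sub>R v" unfolding w_def by simp
    define V' where "V' = {x\<in>V. inner v x = 0}"
    have sV': "subspace V'" using less.prems(1) unfolding V'_def subspace_def
      by (auto simp: inner_add_right)
    have iV': "A ` V' \<subseteq> V'"
    proof
      fix y assume "y \<in> A ` V'"
      then obtain x where x: "x \<in> V'" "y = A x" by auto
      have "inner v (A x) = inner (A v) x" using sym by simp
      also have "\<dots> = 0" using x eig by (simp add: V'_def)
      finally show "y \<in> V'" using x less.prems(2) by (auto simp: V'_def)
    qed
    have "v \<notin> V'" using vv by (simp add: V'_def)
    moreover have "V' \<subseteq> V" by (auto simp: V'_def)
    ultimately have "V' \<subset> V" using vV by blast
    hence "dim V' < dim V" using dim_psubset[of V' V] span_eq_iff[THEN iffD2, OF sV'] span_eq_iff[THEN iffD2, OF less.prems(1)] by simp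
    from less.hyps[OF this sV' iV'] obtain B' where B': "finite B'" "B' \<subseteq> V'" "span B' = V'"
      "\<forall>b\<in>B'. norm b = 1 \<and> (\<exists>l. A b = l *\<^sub>R b)" "pairwise orthogonal B'" by blast
    show ?thesis
    proof (intro exI[of _ "insert v B'"] conjI)
      show "finite (insert v B')" using B' by simp
      show "insert v B' \<subseteq> V" using B' vV by (auto simp: V'_def)
      show "\<forall>b\<in>insert v B'. norm b = 1 \<and> (\<exists>l. A b = l *\<^sub>R b)" using B' nv eig by auto
      show "pairwise orthogonal (insert v B')"
        unfolding pairwise_insert
      proof (rule conjI)
        show "\<forall>y. y \<in> B' \<and> y \<noteq> v \<longrightarrow> orthogonal v y \<and> orthogonal y v"
        proof (intro allI impI)
          fix y assume "y \<in> B' \<and> y \<noteq> v"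
          hence "y \<in> B'" by simp
          hence "inner v y = 0" using B'(2) by (auto simp: V'_def)
          thus "orthogonal v y \<and> orthogonal y v" by (simp add: orthogonal_def inner_commute)
        qed
      qed (rule B'(5))
      show "span (insert v B') = V"
      proof
        show "span (insert v B') \<subseteq> V"
          using span_minimal[OF \<open>insert v B' \<subseteq> V\<close> less.prems(1)] .
        show "V \<subseteq> span (insert v B')"
        proof
          fix x assume x: "x \<in> V"
          have "x - inner v x *\<^sub>R v \<in> V"
            using subspace_diff[OF less.prems(1) x subspace_scale[OF less.prems(1) vV]] .
          moreover have "inner v (x - inner v x *\<^sub>R v) = 0" using vv
            by (simp add: inner_diff_right)
          ultimately have "x - inner v x *\<^sub>R v \<in> V'" unfolding V'_def by blast
          hence "x - inner v x *\<^sub>R v \<in> span B'" by (simp only: B'(3))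
          hence "x - inner v x *\<^sub>R v \<in> span (insert v B')"
            using span_mono[of B' "insert v B'"] by blast
          moreover have "inner v x *\<^sub>R v \<in> span (insert v B')"
            by (intro span_mul span_base) simp
          ultimately have "(x - inner v x *\<^sub>R v) + inner v x *\<^sub>R v \<in> span (insert v B')"
            by (rule span_add)
          thus "x \<in> span (insert v B')" by (simp only: diff_add_cancel)
        qed
      qed
    qed
  qed
qed



lemma orthonormal_expand:
  fixes B :: "'a::euclidean_space set"
  assumes fin: "finite B" and orth: "pairwise orthogonal B" and nrm: "\<And>b. b \<in> B \<Longrightarrow> norm b = 1"
    and sp: "span B = UNIV"
  shows "x = (\<Sum>b\<in>B. inner b x *\<^sub>R b)"
proof -
  define y where "y = x - (\<Sum>b\<in>B. inner b x *\<^sub>R b)"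
  have "inner c y = 0" if c: "c \<in> B" for c
  proof -
    have "(\<Sum>b\<in>B. inner b x * inner c b) = inner c x * inner c c"
    proof (subst sum.remove[OF fin c])
      have "(\<Sum>b\<in>B - {c}. inner b x * inner c b) = 0"
      proof (rule sum.neutral, rule ballI)
        fix b assume "b \<in> B - {c}"
        hence "inner c b = 0" using orth c unfolding pairwise_def orthogonal_def by auto
        thus "inner b x * inner c b = 0" by simp
      qed
      thus "inner c x * inner c c + (\<Sum>b\<in>B - {c}. inner b x * inner c b) = inner c x * inner c c"
        by simp
    qed
    moreover have "inner c c = 1" using nrm[OF c] by (simp add: dot_square_norm)
    ultimately show ?thesis unfolding y_def by (simp add: inner_diff_right inner_sum_right)
  qed
  hence "orthogonal y z" if "z \<in> span B" for z
    using orthogonal_to_span[OF that] by (simp add: orthogonal_def inner_commute)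
  hence "orthogonal y y" using sp by simp
  hence "y = 0" by (simp add: orthogonal_self)
  thus ?thesis unfolding y_def by simp
qed

lemma sqrt_exists:
  fixes E :: "nat \<Rightarrow> 'a::euclidean_space" and A :: "nat \<Rightarrow> nat \<Rightarrow> real"
  assumes E: "\<And>s t. s < k \<Longrightarrow> t < k \<Longrightarrow> inner (E s) (E t) = (if s = t then 1 else 0)"
    and psd: "psd_mat k A"
  shows "\<exists>R. psd_mat k R \<and> (\<forall>s<k. \<forall>t<k. (\<Sum>r<k. R s r * R r t) = A s t) \<and>
             (\<forall>s t. k \<le> s \<or> k \<le> t \<longrightarrow> R s t = 0)"
proof -
  have symA: "A s t = A t s" if "s < k" "t < k" for s t
    using psd that unfolding psd_mat_def sym_mat_def by blast
  define A' where "A' x = (\<Sum>s<k. (\<Sum>t<k. A s t * inner (E t) x) *\<^sub>R E s)" for x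
  have lin: "linear A'"
  proof (rule linearI)
    fix x y show "A' (x + y) = A' x + A' y"
      unfolding A'_def by (simp add: inner_add_right distrib_left sum.distrib scaleR_add_left)
  next
    fix c x show "A' (c *\<^sub>R x) = c *\<^sub>R A' x"
      unfolding A'_def by (simp add: scaleR_sum_right sum_distrib_left mult_ac)
  qed
  have inA: "inner (A' x) y = (\<Sum>s<k. \<Sum>t<k. inner (E s) y * A s t * inner (E t) x)" for x y
    unfolding A'_def by (simp add: inner_sum_left sum_distrib_left sum_distrib_right mult_ac)
  have sym: "inner (A' x) y = inner x (A' y)" for x y
  proof -
    have "inner (A' x) y = (\<Sum>s<k. \<Sum>t<k. inner (E s) y * A s t * inner (E t) x)" by (rule inA)
    also have "\<dots> = (\<Sum>t<k. \<Sum>s<k. inner (E s) y * A s t * inner (E t) x)" by (rule sum.swap)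
    also have "\<dots> = (\<Sum>t<k. \<Sum>s<k. inner (E t) x * A t s * inner (E s) y)"
      by (intro sum.cong refl) (simp add: symA mult_ac)
    also have "\<dots> = inner (A' y) x" by (rule inA[symmetric])
    finally show ?thesis by (simp add: inner_commute)
  qed
  have qpos: "inner x (A' x) \<ge> 0" for x
  proof -
    have "inner x (A' x) = inner (A' x) x" by (simp add: inner_commute)
    also have "\<dots> = (\<Sum>s<k. \<Sum>t<k. inner (E s) x * A s t * inner (E t) x)" by (rule inA)
    finally show ?thesis using psd unfolding psd_mat_def by simp
  qed
  obtain B where B: "finite B" "span B = UNIV" "\<And>b. b \<in> B \<Longrightarrow> norm b = 1"
      "\<And>b. b \<in> B \<Longrightarrow> \<exists>l. A' b = l *\<^sub>R b" "pairwise orthogonal B"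
    using spectral_aux[OF lin sym, of UNIV] by auto
  define lam where "lam b = inner b (A' b)" for b
  have lam_nn: "lam b \<ge> 0" for b using qpos by (simp add: lam_def)
  have bb: "inner b b = 1" if "b \<in> B" for b using B(3)[OF that] by (simp add: dot_square_norm)
  have eig: "A' b = lam b *\<^sub>R b" if bB: "b \<in> B" for b
  proof -
    obtain l where l: "A' b = l *\<^sub>R b" using B(4)[OF bB] by blast
    hence "lam b = l" using bb[OF bB] by (simp add: lam_def)
    thus ?thesis using l by simp
  qed
  have expand: "x = (\<Sum>b\<in>B. inner b x *\<^sub>R b)" for x
    by (rule orthonormal_expand[OF B(1) B(5) B(3) B(2)])
  have Aexp: "A' x = (\<Sum>b\<in>B. (lam b * inner b x) *\<^sub>R b)" for x
  proof -
    have "A' x = A' (\<Sum>b\<in>B. inner b x *\<^sub>R b)" using expand[of x] by simp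
    also have "\<dots> = (\<Sum>b\<in>B. inner b x *\<^sub>R A' b)"
      by (simp add: linear_sum[OF lin] linear_scale[OF lin])
    also have "\<dots> = (\<Sum>b\<in>B. (lam b * inner b x) *\<^sub>R b)"
      by (intro sum.cong refl) (simp add: eig)
    finally show ?thesis .
  qed
  have EA: "inner (E r) (A' x) = (\<Sum>t<k. A r t * inner (E t) x)" if "r < k" for r x
  proof -
    have "inner (E r) (A' x) = (\<Sum>s<k. (\<Sum>t<k. A s t * inner (E t) x) * inner (E r) (E s))"
      unfolding A'_def by (simp add: inner_sum_right)
    also have "\<dots> = (\<Sum>s<k. if s = r then (\<Sum>t<k. A s t * inner (E t) x) else 0)"
      by (intro sum.cong refl) (simp add: E that)
    also have "\<dots> = (\<Sum>t<k. A r t * inner (E t) x)" using that by simp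
    finally show ?thesis .
  qed
  have PA: "(\<Sum>r<k. inner (E r) (A' x) *\<^sub>R E r) = A' x" for x
  proof -
    have "(\<Sum>r<k. inner (E r) (A' x) *\<^sub>R E r) = (\<Sum>r<k. (\<Sum>t<k. A r t * inner (E t) x) *\<^sub>R E r)"
      by (intro sum.cong refl) (simp add: EA)
    also have "\<dots> = A' x" by (simp add: A'_def)
    finally show ?thesis .
  qed
  have Pb: "(\<Sum>r<k. inner (E r) b *\<^sub>R E r) = b" if "b \<in> B" "lam b \<noteq> 0" for b
  proof -
    have "b = (1 / lam b) *\<^sub>R A' b" using eig[OF that(1)] that(2) by simp
    hence "(\<Sum>r<k. inner (E r) b *\<^sub>R E r) = (\<Sum>r<k. inner (E r) ((1 / lam b) *\<^sub>R A' b) *\<^sub>R E r)"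
      by simp
    also have "\<dots> = (1 / lam b) *\<^sub>R (\<Sum>r<k. inner (E r) (A' b) *\<^sub>R E r)"
      by (simp add: scaleR_sum_right)
    also have "\<dots> = b" using PA[of b] eig[OF that(1)] that(2) by simp
    finally show ?thesis .
  qed
  define R where "R s t = (if s < k \<and> t < k then (\<Sum>b\<in>B. sqrt (lam b) * inner b (E s) * inner b (E t)) else 0)" for s t
  show ?thesis
  proof (intro exI[of _ R] conjI allI impI)
    fix s t assume "k \<le> s \<or> k \<le> t" thus "R s t = 0" by (auto simp: R_def)
  next
    show "psd_mat k R" unfolding psd_mat_def sym_mat_def
    proof (intro conjI allI impI)
      fix s t assume "s < k" "t < k" thus "R s t = R t s" by (simp add: R_def mult_ac)
    next
      fix v :: "nat \<Rightarrow> real"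
      have "(\<Sum>s<k. \<Sum>t<k. v s * R s t * v t) =
            (\<Sum>s<k. \<Sum>t<k. \<Sum>b\<in>B. sqrt (lam b) * (v s * inner b (E s)) * (v t * inner b (E t)))"
        by (intro sum.cong refl) (simp add: R_def sum_distrib_left sum_distrib_right mult_ac)
      also have "\<dots> = (\<Sum>b\<in>B. sqrt (lam b) * (\<Sum>s<k. v s * inner b (E s)) * (\<Sum>t<k. v t * inner b (E t)))"
        by (simp add: sum_distrib_left sum_distrib_right sum.swap[of _ B] mult_ac)
      also have "\<dots> \<ge> 0"
        unfolding mult.assoc by (intro sum_nonneg mult_nonneg_nonneg real_sqrt_ge_zero lam_nn zero_le_square)
      finally show "(\<Sum>s<k. \<Sum>t<k. v s * R s t * v t) \<ge> 0" .
    qed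
  next
    fix s t assume st: "s < k" "t < k"
    have cross: "sqrt (lam b) * sqrt (lam c) * (\<Sum>r<k. inner b (E r) * inner c (E r))
        = (if b = c then lam b else 0)" if "b \<in> B" "c \<in> B" for b c
    proof (cases "lam b = 0")
      case True
      thus ?thesis by auto
    next
      case False
      have "(\<Sum>r<k. inner b (E r) * inner c (E r)) = inner (\<Sum>r<k. inner (E r) b *\<^sub>R E r) c"
        by (simp add: inner_sum_left) (simp add: inner_commute)
      also have "\<dots> = inner b c" using Pb[OF that(1) False] by simp
      also have "\<dots> = (if b = c then 1 else 0)"
        using bb[OF that(1)] B(5) that unfolding pairwise_def orthogonal_def by auto
      finally show ?thesis using lam_nn[of b]
        by (auto simp add: real_sqrt_mult[symmetric])
    qed
    have "(\<Sum>r<k. R s r * R r t) = (\<Sum>r<k. \<Sum>b\<in>B. \<Sum>c\<in>B. (sqrt (lam b) * inner b (E s) * inner b (E r)) * (sqrt (lam c) * inner c (E r) * inner c (E t)))"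
      using st by (intro sum.cong refl) (simp add: R_def sum_product)
    also have "\<dots> =
       (\<Sum>r<k. \<Sum>b\<in>B. \<Sum>c\<in>B. (sqrt (lam b) * inner b (E s)) * (sqrt (lam c) * inner c (E t)) * (inner b (E r) * inner c (E r)))"
      by (intro sum.cong refl) (simp add: mult_ac)
    also have "\<dots> = (\<Sum>b\<in>B. \<Sum>c\<in>B. inner b (E s) * inner c (E t) *
          (sqrt (lam b) * sqrt (lam c) * (\<Sum>r<k. inner b (E r) * inner c (E r))))"
      by (simp add: sum_distrib_left sum.swap[of _ "{..<k}"] mult_ac)
    also have "\<dots> = (\<Sum>b\<in>B. \<Sum>c\<in>B. inner b (E s) * inner c (E t) * (if b = c then lam b else 0))"
      by (intro sum.cong refl) (simp add: cross)
    also have "\<dots> = (\<Sum>b\<in>B. lam b * inner b (E t) * inner b (E s))"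
    proof (intro sum.cong refl)
      fix b assume bB: "b \<in> B"
      have "(\<Sum>c\<in>B. inner b (E s) * inner c (E t) * (if b = c then lam b else 0)) =
          (\<Sum>c\<in>B. if b = c then lam b * inner b (E t) * inner b (E s) else 0)"
        by (intro sum.cong refl) auto
      also have "\<dots> = lam b * inner b (E t) * inner b (E s)" using B(1) bB by (simp add: sum.delta)
      finally show "(\<Sum>c\<in>B. inner b (E s) * inner c (E t) * (if b = c then lam b else 0)) =
          lam b * inner b (E t) * inner b (E s)" .
    qed
    also have "\<dots> = inner (A' (E t)) (E s)"
      by (subst Aexp) (simp add: inner_sum_left)
    also have "\<dots> = inner (E s) (A' (E t))" by (simp add: inner_commute)
    also have "\<dots> = (\<Sum>t'<k. A s t' * inner (E t') (E t))" by (rule EA[OF st(1)])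
    also have "\<dots> = (\<Sum>t'<k. if t' = t then A s t' else 0)"
      by (intro sum.cong refl) (simp add: E st)
    also have "\<dots> = A s t" using st by simp
    finally show "(\<Sum>r<k. R s r * R r t) = A s t" .
  qed
qed




lemma psd_null:
  assumes P: "psd_mat k P" and q0: "(\<Sum>s<k. \<Sum>t<k. x s * P s t * x t) = 0"
  shows "\<forall>s<k. (\<Sum>t<k. P s t * x t) = 0"
proof -
  define y where "y s = (\<Sum>t<k. P s t * x t)" for s
  define N where "N = (\<Sum>s<k. (y s)^2)"
  define Qy where "Qy = (\<Sum>s<k. \<Sum>t<k. y s * P s t * y t)"
  have symP: "P s t = P t s" if "s < k" "t < k" for s t
    using P that unfolding psd_mat_def sym_mat_def by blast
  have c1: "(\<Sum>s<k. \<Sum>t<k. y s * P s t * x t) = N"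
    unfolding N_def y_def by (simp add: sum_distrib_left power2_eq_square mult_ac)
  have "(\<Sum>s<k. \<Sum>t<k. x s * P s t * y t) = (\<Sum>t<k. \<Sum>s<k. x s * P s t * y t)" by (rule sum.swap)
  also have "\<dots> = (\<Sum>t<k. \<Sum>s<k. y t * P t s * x s)"
    by (intro sum.cong refl) (simp add: symP mult_ac)
  also have "\<dots> = N" by (rule c1)
  finally have c2: "(\<Sum>s<k. \<Sum>t<k. x s * P s t * y t) = N" .
  have "2*t*N + t^2*(-Qy) \<le> 0" for t
  proof -
    have pos: "\<forall>v. 0 \<le> (\<Sum>s<k. \<Sum>t<k. v s * P s t * v t)" using P unfolding psd_mat_def by blast
    have "0 \<le> (\<Sum>s<k. \<Sum>t'<k. (x s - t * y s) * P s t' * (x t' - t * y t'))"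
      using pos[rule_format, of "\<lambda>s. x s - t * y s"] by simp
    also have "\<dots> = (\<Sum>s<k. \<Sum>t'<k. x s * P s t' * x t' - t * (y s * P s t' * x t')
        - t * (x s * P s t' * y t') + t^2 * (y s * P s t' * y t'))"
      by (intro sum.cong refl) (simp add: algebra_simps power2_eq_square)
    also have "\<dots> = (\<Sum>s<k. \<Sum>t'<k. x s * P s t' * x t') - t * (\<Sum>s<k. \<Sum>t'<k. y s * P s t' * x t')
        - t * (\<Sum>s<k. \<Sum>t'<k. x s * P s t' * y t') + t^2 * Qy"
      unfolding Qy_def by (simp only: sum.distrib sum_subtractf sum_distrib_left)
    finally show ?thesis using q0 c1 c2 by (simp add: mult_ac)
  qed
  hence "N = 0" by (rule quad_aux) (simp add: N_def sum_nonneg)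
  hence "\<forall>s<k. (y s)^2 = 0" unfolding N_def by (simp add: sum_nonneg_eq_0_iff)
  thus ?thesis unfolding y_def by simp
qed

lemma sqrt_unique:
  assumes R: "psd_mat k R" and S: "psd_mat k S"
    and sq: "\<forall>s<k. \<forall>t<k. (\<Sum>r<k. R s r * R r t) = (\<Sum>r<k. S s r * S r t)"
    and R0: "\<forall>s t. k \<le> s \<or> k \<le> t \<longrightarrow> R s t = 0"
    and S0: "\<forall>s t. k \<le> s \<or> k \<le> t \<longrightarrow> S s t = 0"
  shows "R = S"
proof -
  define D where "D s t = R s t - S s t" for s t
  define T where "T s t = R s t + S s t" for s t
  have symR: "R s t = R t s" if "s < k" "t < k" for s t
    using R that unfolding psd_mat_def sym_mat_def by blast
  have symS: "S s t = S t s" if "s < k" "t < k" for s t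
    using S that unfolding psd_mat_def sym_mat_def by blast
  have symD: "D s t = D t s" if "s < k" "t < k" for s t
    using symR[OF that] symS[OF that] by (simp add: D_def)
  have stepa: "(\<Sum>r<k. T s r * D r t) = - (\<Sum>r<k. D s r * T r t)" if st: "s < k" "t < k" for s t
  proof -
    have "(\<Sum>r<k. T s r * D r t) + (\<Sum>r<k. D s r * T r t) = (\<Sum>r<k. T s r * D r t + D s r * T r t)"
      by (simp only: sum.distrib)
    also have "\<dots> = (\<Sum>r<k. 2 * (R s r * R r t) - 2 * (S s r * S r t))"
      unfolding T_def D_def by (intro sum.cong refl) (simp add: algebra_simps)
    also have "\<dots> = 2 * (\<Sum>r<k. R s r * R r t) - 2 * (\<Sum>r<k. S s r * S r t)"
      by (simp only: sum_subtractf sum_distrib_left)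
    finally have "(\<Sum>r<k. T s r * D r t) + (\<Sum>r<k. D s r * T r t)
        = 2 * (\<Sum>r<k. R s r * R r t) - 2 * (\<Sum>r<k. S s r * S r t)" .
    thus ?thesis using sq st by simp
  qed
  define tr where "tr X = (\<Sum>i<k. \<Sum>a<k. \<Sum>b<k. D a i * X a b * D b i)" for X
  have trT: "tr T = 0"
  proof -
    have "tr T = (\<Sum>i<k. \<Sum>a<k. D i a * (\<Sum>b<k. T a b * D b i))"
      unfolding tr_def
    proof (intro sum.cong refl)
      fix i a assume "i \<in> {..<k}" "a \<in> {..<k}"
      hence "D a i = D i a" using symD by simp
      thus "(\<Sum>b<k. D a i * T a b * D b i) = D i a * (\<Sum>b<k. T a b * D b i)"
        by (simp add: sum_distrib_left mult.assoc)
    qed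
    also have "\<dots> = (\<Sum>i<k. \<Sum>a<k. D i a * (- (\<Sum>b<k. D a b * T b i)))"
      by (intro sum.cong refl) (simp add: stepa)
    also have "\<dots> = - (\<Sum>i<k. \<Sum>a<k. \<Sum>b<k. D i a * D a b * T b i)"
      by (simp add: sum_distrib_left sum_negf mult.assoc)
    finally have e1: "tr T = - (\<Sum>i<k. \<Sum>a<k. \<Sum>b<k. D i a * D a b * T b i)" .
    have "(\<Sum>i<k. \<Sum>a<k. \<Sum>b<k. D i a * D a b * T b i) = (\<Sum>a<k. \<Sum>i<k. \<Sum>b<k. D i a * D a b * T b i)"
      by (rule sum.swap)
    also have "\<dots> = (\<Sum>a<k. \<Sum>b<k. \<Sum>i<k. D i a * D a b * T b i)"
      by (rule sum.cong[OF refl], rule sum.swap)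
    also have "\<dots> = tr T"
      unfolding tr_def
    proof (intro sum.cong refl)
      fix a b i assume "a \<in> {..<k}" "b \<in> {..<k}" "i \<in> {..<k}"
      hence "D a b = D b a" using symD by simp
      thus "D i a * D a b * T b i = D b a * T b i * D i a" by (simp add: mult_ac)
    qed
    finally show ?thesis using e1 by simp
  qed
  have trnn: "tr X \<ge> 0" if "psd_mat k X" for X
  proof -
    have pos: "\<forall>v. 0 \<le> (\<Sum>s<k. \<Sum>t<k. v s * X s t * v t)" using that unfolding psd_mat_def by blast
    show ?thesis unfolding tr_def
    proof (rule sum_nonneg)
      fix i show "0 \<le> (\<Sum>a<k. \<Sum>b<k. D a i * X a b * D b i)"
        using pos[rule_format, of "\<lambda>a. D a i"] by simp
    qed
  qed
  have trsplit: "tr T = tr R + tr S"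
    unfolding tr_def T_def by (simp add: distrib_left distrib_right sum.distrib)
  have trR: "tr R = 0" and trS: "tr S = 0" using trT trsplit trnn[OF R] trnn[OF S] by linarith+
  have RD: "\<forall>a<k. (\<Sum>b<k. R a b * D b i) = 0" if i: "i < k" for i
  proof (rule psd_null[OF R])
    have "\<forall>i\<in>{..<k}. (\<Sum>a<k. \<Sum>b<k. D a i * R a b * D b i) = 0"
      using trR trnn R unfolding tr_def psd_mat_def
      by (subst sum_nonneg_eq_0_iff[symmetric]) auto
    thus "(\<Sum>a<k. \<Sum>b<k. D a i * R a b * D b i) = 0" using i by blast
  qed
  have SD: "\<forall>a<k. (\<Sum>b<k. S a b * D b i) = 0" if i: "i < k" for i
  proof (rule psd_null[OF S])
    have "\<forall>i\<in>{..<k}. (\<Sum>a<k. \<Sum>b<k. D a i * S a b * D b i) = 0"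
      using trS trnn S unfolding tr_def psd_mat_def
      by (subst sum_nonneg_eq_0_iff[symmetric]) auto
    thus "(\<Sum>a<k. \<Sum>b<k. D a i * S a b * D b i) = 0" using i by blast
  qed
  have D0: "D i b = 0" if "i < k" "b < k" for i b
  proof -
    have "(\<Sum>c<k. D i c * D c i) = (\<Sum>c<k. R i c * D c i) - (\<Sum>c<k. S i c * D c i)"
      unfolding D_def[of i] by (simp add: sum_subtractf[symmetric] left_diff_distrib)
    also have "\<dots> = 0" using RD[OF that(1)] SD[OF that(1)] that by simp
    finally have "(\<Sum>c<k. (D i c)^2) = 0"
      using symD that(1) by (simp add: power2_eq_square)
    hence "(D i b)^2 = 0" using that by (simp add: sum_nonneg_eq_0_iff)
    thus ?thesis by simp
  qed
  show ?thesis
  proof (intro ext)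
    fix s t show "R s t = S s t"
    proof (cases "s < k \<and> t < k")
      case True thus ?thesis using D0[of s t] by (simp add: D_def)
    next
      case False thus ?thesis using R0 S0 by auto
    qed
  qed
qed




lemma Ck3_unfold:
  "Ck_on 3 U f \<Longrightarrow> (\<forall>x\<in>U. f differentiable (at x)) \<and>
     (\<forall>b\<in>Basis. \<forall>x\<in>U. (\<lambda>x. frechet_derivative f (at x) b) differentiable (at x))"
  by (simp add: numeral_3_eq_3)

lemma deriv_le_lip:
  fixes \<psi> :: "real \<Rightarrow> real"
  assumes d: "(\<psi> has_field_derivative d) (at 0)" and lip: "\<And>t. \<bar>\<psi> t - \<psi> 0\<bar> \<le> L * \<bar>t\<bar>"
  shows "d \<le> L"
proof -
  have lim: "((\<lambda>y. (\<psi> y - \<psi> 0) / (y - 0)) \<longlongrightarrow> d) (at 0)"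
    using d unfolding has_field_derivative_iff .
  have ev: "eventually (\<lambda>y. (\<psi> y - \<psi> 0) / (y - 0) \<le> L) (at (0::real))"
    unfolding eventually_at
  proof (intro exI[of _ 1] conjI allI impI ballI, simp)
    fix y :: real assume "y \<in> UNIV" "y \<noteq> 0 \<and> dist y 0 < 1"
    hence y: "y \<noteq> 0" by simp
    have "(\<psi> y - \<psi> 0) / y \<le> \<bar>\<psi> y - \<psi> 0\<bar> / \<bar>y\<bar>"
      using y by (cases "y > 0") (auto simp: divide_simps)
    also have "\<dots> \<le> L" using lip[of y] y by (simp add: divide_simps)
    finally show "(\<psi> y - \<psi> 0) / (y - 0) \<le> L" by simp
  qed
  show ?thesis by (rule tendsto_upperbound[OF lim ev]) simp
qed

lemma hess_le:
  fixes f :: "(real, 'n::finite) vec \<Rightarrow> real"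
  assumes C3: "open U" "\<beta> \<in> U" "Ck_on 3 U f"
    and lip: "\<And>x h. \<bar>pdiff j f (x + h *\<^sub>R axis j 1) - pdiff j f x\<bar> \<le> Lj * \<bar>h\<bar>"
  shows "hess f \<beta> j j \<le> Lj"
proof -
  define e :: "(real, 'n) vec" where "e = axis j 1"
  have eB: "e \<in> Basis" by (simp add: e_def)
  have pd: "pdiff j f = (\<lambda>x. frechet_derivative f (at x) e)"
    by (simp add: pdiff_def e_def fun_eq_iff)
  have "pdiff j f differentiable (at \<beta>)"
    using Ck3_unfold[OF C3(3)] eB C3(2) unfolding pd by blast
  then have hd: "(pdiff j f has_derivative frechet_derivative (pdiff j f) (at \<beta>)) (at \<beta>)"
    by (simp add: frechet_derivative_works)
  define D where "D = frechet_derivative (pdiff j f) (at \<beta>)"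
  have lD: "linear D" using hd unfolding D_def by (simp add: has_derivative_linear)
  have inner_d: "((\<lambda>t::real. \<beta> + t *\<^sub>R e) has_derivative (\<lambda>t. t *\<^sub>R e)) (at 0)"
    by (auto intro!: derivative_eq_intros)
  have "((pdiff j f \<circ> (\<lambda>t. \<beta> + t *\<^sub>R e)) has_derivative (D \<circ> (\<lambda>t. t *\<^sub>R e))) (at 0)"
    by (rule diff_chain_at[OF inner_d]) (simp add: hd[folded D_def])
  moreover have "(D \<circ> (\<lambda>t. t *\<^sub>R e)) = (\<lambda>t. D e * t)"
    using linear_scale[OF lD] by (auto simp: fun_eq_iff)
  ultimately have "((\<lambda>t. pdiff j f (\<beta> + t *\<^sub>R e)) has_field_derivative D e) (at 0)"
    unfolding has_field_derivative_def by (simp add: o_def)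
  moreover have "hess f \<beta> j j = D e" by (simp add: hess_def pdiff_def[of j "pdiff j f"] D_def e_def)
  ultimately show ?thesis
    using deriv_le_lip[of "\<lambda>t. pdiff j f (\<beta> + t *\<^sub>R e)" "D e" Lj] lip[of \<beta>] by (simp add: e_def)
qed

lemma gpp_bound:
  fixes h :: "real \<Rightarrow> ereal"
  assumes Lp: "Lj > 0" and al: "\<alpha> < 1"
    and conv: "ext_convex (\<lambda>x. h x / ereal Lj + ereal (\<alpha> / 2 * x\<^sup>2))"
    and U: "open U" "x0 \<in> U" "\<forall>x\<in>U. \<exists>r. h x = ereal r" "Ck_on 3 U (\<lambda>x. real_of_ereal (h x))"
  shows "1 + (1 / Lj) * gpp h x0 > 0"
proof -
  define \<phi> where "\<phi> x = real_of_ereal (h x)" for x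
  have hfin: "h x = ereal (\<phi> x)" if "x \<in> U" for x
    using U(3) that unfolding \<phi>_def by force
  define \<phi>1 where "\<phi>1 x = frechet_derivative \<phi> (at x) 1" for x
  have C: "(\<forall>x\<in>U. \<phi> differentiable (at x)) \<and> (\<forall>x\<in>U. \<phi>1 differentiable (at x))"
    using Ck3_unfold[OF U(4)[folded \<phi>_def]] unfolding \<phi>1_def[abs_def] by simp
  have d\<phi>: "(\<phi> has_field_derivative \<phi>1 x) (at x)" if "x \<in> U" for x
  proof -
    have hd: "(\<phi> has_derivative frechet_derivative \<phi> (at x)) (at x)"
      using C that by (simp add: frechet_derivative_works)
    have lin: "linear (frechet_derivative \<phi> (at x))" using hd by (rule has_derivative_linear)
    have "frechet_derivative \<phi> (at x) = (\<lambda>y. \<phi>1 x * y)"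
    proof
      fix y :: real
      have "frechet_derivative \<phi> (at x) (y *\<^sub>R 1) = y *\<^sub>R frechet_derivative \<phi> (at x) 1"
        by (rule linear_scale[OF lin])
      thus "frechet_derivative \<phi> (at x) y = \<phi>1 x * y" by (simp add: \<phi>1_def)
    qed
    thus ?thesis using hd unfolding has_field_derivative_def by simp
  qed
  have deq: "deriv \<phi> y = \<phi>1 y" if "y \<in> U" for y
    using d\<phi>[OF that] by (rule DERIV_imp_deriv)
  define G where "G = deriv \<phi>1 x0"
  have gG: "gpp h x0 = G"
  proof -
    have "eventually (\<lambda>y. deriv \<phi> y = \<phi>1 y) (nhds x0)"
      unfolding eventually_nhds using U(1,2) deq by blast
    hence "deriv (deriv \<phi>) x0 = deriv \<phi>1 x0" by (rule deriv_cong_ev) simp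
    thus ?thesis by (simp add: gpp_def G_def \<phi>_def[abs_def])
  qed
  have dG: "(\<phi>1 has_field_derivative G) (at x0)"
    using C U(2) unfolding G_def by (simp add: DERIV_deriv_iff_real_differentiable)
  obtain \<delta> where \<delta>: "\<delta> > 0" "ball x0 \<delta> \<subseteq> U" using U(1,2) open_contains_ball by blast
  define B where "B = ball x0 \<delta>"
  define \<psi> where "\<psi> x = \<phi> x / Lj + \<alpha> / 2 * x\<^sup>2" for x
  define \<psi>' where "\<psi>' x = \<phi>1 x / Lj + \<alpha> * x" for x
  have cvx: "convex_on B \<psi>"
  proof (rule convex_onI)
    show "convex B" by (simp add: B_def)
    fix t x y :: real assume t: "0 < t" "t < 1" and xy: "x \<in> B" "y \<in> B"
    have zB: "(1 - t) *\<^sub>R x + t *\<^sub>R y \<in> B"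
      using convexD[of B x y "1 - t" t] xy t by (simp add: B_def)
    have e: "h ((1 - t) * x + t * y) / ereal Lj + ereal (\<alpha> / 2 * ((1 - t) * x + t * y)\<^sup>2)
        \<le> ereal (1 - t) * (h x / ereal Lj + ereal (\<alpha> / 2 * x\<^sup>2)) + ereal t * (h y / ereal Lj + ereal (\<alpha> / 2 * y\<^sup>2))"
      using conv t unfolding ext_convex_def by blast
    have hz: "h ((1 - t) * x + t * y) = ereal (\<phi> ((1 - t) * x + t * y))"
      using hfin zB \<delta>(2) B_def by auto
    have hx: "h x = ereal (\<phi> x)" and hy: "h y = ereal (\<phi> y)" using hfin xy \<delta>(2) B_def by auto
    show "\<psi> ((1 - t) *\<^sub>R x + t *\<^sub>R y) \<le> (1 - t) * \<psi> x + t * \<psi> y"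
      using e Lp unfolding hz hx hy \<psi>_def by simp
  qed
  have dpsi: "(\<psi> has_field_derivative \<psi>' y) (at y within B)" if "y \<in> B" for y
  proof -
    have "y \<in> U" using that \<delta>(2) B_def by auto
    from d\<phi>[OF this] have "(\<psi> has_field_derivative \<psi>' y) (at y)"
      unfolding \<psi>_def[abs_def] \<psi>'_def using Lp by (auto intro!: derivative_eq_intros simp: power2_eq_square)
    thus ?thesis by (rule has_field_derivative_at_within)
  qed
  have mono: "\<psi>' x \<le> \<psi>' y" if "x \<in> B" "y \<in> B" "x < y" for x y
  proof -
    have iB: "interior B = B" by (simp add: B_def)
    have 1: "\<psi> y - \<psi> x \<ge> \<psi>' x * (y - x)"
      by (rule convex_on_imp_above_tangent[OF cvx]) (use that iB dpsi in \<open>auto simp: B_def\<close>)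
    have 2: "\<psi> x - \<psi> y \<ge> \<psi>' y * (x - y)"
      by (rule convex_on_imp_above_tangent[OF cvx]) (use that iB dpsi in \<open>auto simp: B_def\<close>)
    have "(\<psi>' y - \<psi>' x) * (y - x) \<ge> 0" using 1 2 by (simp add: algebra_simps)
    thus ?thesis using that(3) by (simp add: zero_le_mult_iff)
  qed
  have dpsi': "(\<psi>' has_field_derivative G / Lj + \<alpha>) (at x0)"
    unfolding \<psi>'_def[abs_def] using dG Lp by (auto intro!: derivative_eq_intros)
  hence lim: "((\<lambda>y. (\<psi>' y - \<psi>' x0) / (y - x0)) \<longlongrightarrow> G / Lj + \<alpha>) (at x0)"
    unfolding has_field_derivative_iff .
  have ev: "eventually (\<lambda>y. 0 \<le> (\<psi>' y - \<psi>' x0) / (y - x0)) (at x0)"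
    unfolding eventually_at
  proof (intro exI[of _ \<delta>] conjI allI impI ballI)
    show "\<delta> > 0" by (rule \<delta>(1))
    fix y assume "y \<in> UNIV" "y \<noteq> x0 \<and> dist y x0 < \<delta>"
    hence y: "y \<noteq> x0" "y \<in> B" by (auto simp: B_def dist_commute)
    have x0B: "x0 \<in> B" using \<delta>(1) by (simp add: B_def)
    show "0 \<le> (\<psi>' y - \<psi>' x0) / (y - x0)"
    proof (cases "y < x0")
      case True
      thus ?thesis using mono[OF y(2) x0B True] by (simp add: divide_nonpos_neg)
    next
      case False
      hence "x0 < y" using y(1) by simp
      thus ?thesis using mono[OF x0B y(2)] by simp
    qed
  qed
  have "0 \<le> G / Lj + \<alpha>" by (rule tendsto_lowerbound[OF lim ev]) simp
  hence "1 + G / Lj > 0" using al by simp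
  thus ?thesis using gG by simp
qed




lemma mat_sqrt_props:
  fixes E :: "nat \<Rightarrow> 'a::euclidean_space"
  assumes E: "\<And>s t. s < k \<Longrightarrow> t < k \<Longrightarrow> inner (E s) (E t) = (if s = t then 1 else 0)"
    and psd: "psd_mat k A"
  shows "psd_mat k (mat_sqrt k A) \<and> (\<forall>s<k. \<forall>t<k. (\<Sum>r<k. mat_sqrt k A s r * mat_sqrt k A r t) = A s t) \<and>
             (\<forall>s t. k \<le> s \<or> k \<le> t \<longrightarrow> mat_sqrt k A s t = 0)"
proof -
  let ?P = "\<lambda>R. psd_mat k R \<and> (\<forall>s<k. \<forall>t<k. (\<Sum>r<k. R s r * R r t) = A s t) \<and>
             (\<forall>s t. k \<le> s \<or> k \<le> t \<longrightarrow> R s t = 0)"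
  obtain R0 where R0: "?P R0" using sqrt_exists[OF E psd] by blast
  have "\<exists>!R. ?P R"
  proof (rule ex1I[of _ R0])
    show "?P R0" by (rule R0)
    fix R1 assume R1: "?P R1"
    show "R1 = R0" by (rule sqrt_unique) (use R0 R1 in auto)
  qed
  hence "?P (THE R. ?P R)" by (rule theI')
  thus ?thesis unfolding mat_sqrt_def .
qed

theorem lemma2:
  fixes f :: "(real, 'n::{finite,linorder}) vec \<Rightarrow> real"
    and g :: "'n \<Rightarrow> real \<Rightarrow> ereal"
    and L :: "'n \<Rightarrow> real"
    and \<beta>h :: "(real, 'n) vec"
  assumes f_convex: "convex_on UNIV f"
    and f_diff: "\<And>x. f differentiable (at x)"
    and L_pos: "\<And>j. L j > 0"
    and f_lip: "\<And>j x h. \<bar>pdiff j f (x + h *\<^sub>R axis j 1) - pdiff j f x\<bar> \<le> L j * \<bar>h\<bar>"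
    and g_proper: "\<And>j. ext_proper (g j)"
    and g_closed: "\<And>j. ext_closed (g j)"
    and g_lb: "\<And>j. ext_lower_bounded (g j)"
    and g_weakconv: "\<exists>\<alpha><1. \<forall>j. ext_convex (\<lambda>x. g j x / ereal (L j) + ereal (\<alpha> / 2 * x\<^sup>2))"
    and cd_conv: "\<exists>x :: nat \<Rightarrow> (real, 'n) vec. (\<forall>k. x (Suc k) = cd_epoch f g L (x k)) \<and> x \<longlonglongrightarrow> \<beta>h"
    and critical: "- grad f \<beta>h \<in> frechet_subdiff (sep_sum g) \<beta>h"
    and nondegen: "\<And>j. j \<notin> gsupp g \<beta>h \<Longrightarrow>
                     - pdiff j f \<beta>h \<in> interior (frechet_subdiff (g j) (\<beta>h $ j))"
    and f_C3: "\<exists>U. open U \<and> \<beta>h \<in> U \<and> Ck_on 3 U f"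
    and g_C3: "\<And>j. j \<in> gsupp g \<beta>h \<Longrightarrow> \<exists>U. open U \<and> \<beta>h $ j \<in> U \<and>
                     (\<forall>x\<in>U. \<exists>r. g j x = ereal r) \<and> Ck_on 3 U (\<lambda>x. real_of_ereal (g j x))"
    and M_pd: "posdef_mat (card (gsupp g \<beta>h)) (Mmat f g (gsupp g \<beta>h) \<beta>h)"
  shows "\<forall>s < card (gsupp g \<beta>h). \<forall>u :: nat \<Rightarrow> real.
     (let k = card (gsupp g \<beta>h);
          R = mat_sqrt k (Mmat f g (gsupp g \<beta>h) \<beta>h);
          v = (\<lambda>a. u a - (\<Sum>b<k. Bmat f g L (gsupp g \<beta>h) \<beta>h s a b * u b))
      in vnorm k v = vnorm k u \<longrightarrow>
         (\<Sum>a<k. R a s * u a) = 0 \<and> (\<forall>a<k. v a = u a))"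
proof -
  define S where "S = gsupp g \<beta>h"
  define k where "k = card S"
  define M where "M = Mmat f g S \<beta>h"
  define R where "R = mat_sqrt k M"
  define E :: "nat \<Rightarrow> (real, 'n) vec" where "E s = axis (enum_idx S s) 1" for s
  have finS: "finite S" by simp
  have lenS: "length (sorted_list_of_set S) = k" by (simp add: k_def)
  have idx_in: "enum_idx S s \<in> S" if "s < k" for s
    using that lenS unfolding enum_idx_def
    by (metis finS nth_mem set_sorted_list_of_set)
  have idx_inj: "enum_idx S s = enum_idx S t \<longleftrightarrow> s = t" if "s < k" "t < k" for s t
    using that lenS unfolding enum_idx_def
    by (simp add: nth_eq_iff_index_eq)
  have E: "inner (E s) (E t) = (if s = t then 1 else 0)" if "s < k" "t < k" for s t
    using idx_inj[OF that] by (simp add: E_def inner_axis_axis)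
  have psdM: "psd_mat k M"
    using M_pd unfolding psd_mat_def posdef_mat_def M_def k_def S_def
  proof (intro conjI allI)
    fix v :: "nat \<Rightarrow> real"
    assume pd: "sym_mat (card (gsupp g \<beta>h)) (Mmat f g (gsupp g \<beta>h) \<beta>h) \<and>
      (\<forall>v. (\<exists>t<card (gsupp g \<beta>h). v t \<noteq> 0) \<longrightarrow>
           0 < (\<Sum>s<card (gsupp g \<beta>h). \<Sum>t<card (gsupp g \<beta>h). v s * Mmat f g (gsupp g \<beta>h) \<beta>h s t * v t))"
    show "sym_mat (card (gsupp g \<beta>h)) (Mmat f g (gsupp g \<beta>h) \<beta>h)" using pd by blast
    show "0 \<le> (\<Sum>s<card (gsupp g \<beta>h). \<Sum>t<card (gsupp g \<beta>h). v s * Mmat f g (gsupp g \<beta>h) \<beta>h s t * v t)"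
    proof (cases "\<exists>t<card (gsupp g \<beta>h). v t \<noteq> 0")
      case True thus ?thesis using pd by (simp add: less_imp_le)
    next
      case False thus ?thesis by simp
    qed
  qed
  have RP: "psd_mat k R \<and> (\<forall>s<k. \<forall>t<k. (\<Sum>r<k. R s r * R r t) = M s t) \<and>
             (\<forall>s t. k \<le> s \<or> k \<le> t \<longrightarrow> R s t = 0)"
    unfolding R_def by (rule mat_sqrt_props[OF E psdM]) auto
  have symR: "R a b = R b a" if "a < k" "b < k" for a b
    using RP that unfolding psd_mat_def sym_mat_def by blast
  obtain \<alpha> where al: "\<alpha> < 1" and cvx: "\<And>j. ext_convex (\<lambda>x. g j x / ereal (L j) + ereal (\<alpha> / 2 * x\<^sup>2))"
    using g_weakconv by blast
  obtain Uf where Uf: "open Uf" "\<beta>h \<in> Uf" "Ck_on 3 Uf f" using f_C3 by blast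
  show ?thesis unfolding S_def[symmetric] k_def[symmetric] M_def[symmetric] R_def[symmetric] Let_def
  proof (intro allI impI)
    fix s u assume s: "s < k"
    define j where "j = enum_idx S s"
    have jS: "j \<in> gsupp g \<beta>h" using idx_in[OF s] by (simp add: j_def S_def)
    define G where "G = gpp (g j) (\<beta>h $ j)"
    define h where "h = hess f \<beta>h j j"
    define \<gamma> where "\<gamma> = 1 / L j"
    define c where "c = \<gamma> / (1 + \<gamma> * G)"
    have Lj: "L j > 0" by (rule L_pos)
    have hle: "h \<le> L j" unfolding h_def by (rule hess_le[OF Uf f_lip])
    obtain Ug where Ug: "open Ug" "\<beta>h $ j \<in> Ug" "\<forall>x\<in>Ug. \<exists>r. g j x = ereal r"
        "Ck_on 3 Ug (\<lambda>x. real_of_ereal (g j x))" using g_C3[OF jS] by blast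
    have Dpos: "1 + \<gamma> * G > 0" unfolding \<gamma>_def G_def by (rule gpp_bound[OF Lj al cvx Ug])
    have Mss: "M s s = h + G" by (simp add: M_def Mmat_def h_def G_def j_def)
    have nr: "(\<Sum>a<k. (R a s)^2) = M s s"
    proof -
      have "(\<Sum>a<k. (R a s)^2) = (\<Sum>a<k. R s a * R a s)"
        by (intro sum.cong refl) (simp add: symR s power2_eq_square)
      also have "\<dots> = M s s" using RP s by blast
      finally show ?thesis .
    qed
    have gp: "\<gamma> > 0" using Lj by (simp add: \<gamma>_def)
    have cpos: "c > 0" using gp Dpos by (simp add: c_def)
    have gh: "\<gamma> * h \<le> 1" using hle Lj by (simp add: \<gamma>_def divide_simps)
    have cn: "c * M s s < 2"
    proof -
      have "c * M s s = (\<gamma> * h + \<gamma> * G) / (1 + \<gamma> * G)" by (simp add: c_def Mss algebra_simps)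
      also have "\<dots> \<le> 1" using gh Dpos by (simp add: divide_simps)
      finally show ?thesis by simp
    qed
    define p where "p = (\<Sum>b<k. R b s * u b)"
    have Bpt: "Bmat f g L S \<beta>h s a b = R a s * c * R b s" for a b
      unfolding Bmat_def Let_def R_def M_def k_def j_def \<gamma>_def c_def G_def by simp
    have Bexp: "(\<Sum>b<k. Bmat f g L S \<beta>h s a b * u b) = c * R a s * p" for a
      unfolding Bpt p_def by (simp add: sum_distrib_left mult_ac)
    assume eq: "vnorm k (\<lambda>a. u a - (\<Sum>b<k. Bmat f g L S \<beta>h s a b * u b)) = vnorm k u"
    hence "(\<Sum>a<k. (u a - c * R a s * p)^2) = (\<Sum>a<k. (u a)^2)"
      unfolding vnorm_def Bexp by simp
    moreover have "(\<Sum>a<k. (u a - c * R a s * p)^2) = (\<Sum>a<k. (u a)^2) - 2 * c * p * (\<Sum>a<k. R a s * u a)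
        + c^2 * p^2 * (\<Sum>a<k. (R a s)^2)"
    proof -
      have "(\<Sum>a<k. (u a - c * R a s * p)^2) = (\<Sum>a<k. (u a)^2 - 2 * c * p * (R a s * u a) + c^2 * p^2 * (R a s)^2)"
        by (intro sum.cong refl) (simp add: power2_eq_square algebra_simps)
      also have "\<dots> = (\<Sum>a<k. (u a)^2) - 2 * c * p * (\<Sum>a<k. R a s * u a) + c^2 * p^2 * (\<Sum>a<k. (R a s)^2)"
        by (simp only: sum.distrib sum_subtractf sum_distrib_left)
      finally show ?thesis .
    qed
    ultimately have "c^2 * p^2 * M s s - 2 * c * p * p = 0" using nr by (simp add: p_def)
    hence "p^2 * (c * (c * M s s - 2)) = 0" by (simp add: power2_eq_square algebra_simps)
    moreover have "c * (c * M s s - 2) \<noteq> 0" using cpos cn by simp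
    ultimately have p0: "p = 0" by simp
    show "(\<Sum>a<k. R a s * u a) = 0 \<and> (\<forall>a<k. u a - (\<Sum>b<k. Bmat f g L S \<beta>h s a b * u b) = u a)"
      using p0 unfolding Bexp by (simp add: p_def)
  qed
qed


end
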